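(* Let $\underline{L}$ be a finite lattice and let $\underline{S}_1,\underline{S}_2$ be intervals of $\underline{L}$ that are dismantling for $\underline{L}$, with $\underline{S}_2\not\subseteq\underline{S}_1$. Then $\underline{S}_2\setminus\underline{S}_1$ is an interval of the lattice $\underline{L}\setminus\underline{S}_1$ (the set $L\setminus S_1$ with the restricted order) and it is dismantling for $\underline{L}\setminus\underline{S}_1$.
   Context: For $u\le v$ in a lattice $L$, $[u,v]=\{x\mid u\le x\le v\}$, $(v]=\{x\mid x\le v\}$, $[u)=\{x\mid u\le x\}$. An interval $[u,v]$ of $L$ is quasi-dismantling for $L$ if $u$ is supremum-prime in $(v]$ (for all $x,y\in(v]$, $u\le x\vee y$ implies $u\le x$ or $u\le y$) and $v$ is infimum-prime in $[u)$ (for all $x,y\in[u)$, $x\wedge y\le v$ implies $x\le v$ or $y\le v$); it is dismantling for $L$ if moreover $u\neq\bot$ and $v\neq\top$, the least and greatest elements of $L$. (If $[u,v]$ is dismantling for $L$, then $L\setminus[u,v]$ with the restricted order is a lattice.) *)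

theory Defs
  imports Main
begin

text \<open>A lattice is represented by a carrier set A of an ambient partial order,
  with the restricted order. Joins/meets are those computed inside A.\<close>

definition is_sup_in :: "'a::order set \<Rightarrow> 'a \<Rightarrow> 'a \<Rightarrow> 'a \<Rightarrow> bool" where
  "is_sup_in A x y s \<longleftrightarrow> s \<in> A \<and> x \<le> s \<and> y \<le> s \<and> (\<forall>z\<in>A. x \<le> z \<and> y \<le> z \<longrightarrow> s \<le> z)"

definition is_inf_in :: "'a::order set \<Rightarrow> 'a \<Rightarrow> 'a \<Rightarrow> 'a \<Rightarrow> bool" where
  "is_inf_in A x y i \<longleftrightarrow> i \<in> A \<and> i \<le> x \<and> i \<le> y \<and> (\<forall>z\<in>A. z \<le> x \<and> z \<le> y \<longrightarrow> z \<le> i)"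

definition lattice_on :: "'a::order set \<Rightarrow> bool" where
  "lattice_on A \<longleftrightarrow> A \<noteq> {} \<and>
     (\<forall>x\<in>A. \<forall>y\<in>A. (\<exists>s. is_sup_in A x y s) \<and> (\<exists>i. is_inf_in A x y i))"

definition ljoin :: "'a::order set \<Rightarrow> 'a \<Rightarrow> 'a \<Rightarrow> 'a" where
  "ljoin A x y = (THE s. is_sup_in A x y s)"

definition lmeet :: "'a::order set \<Rightarrow> 'a \<Rightarrow> 'a \<Rightarrow> 'a" where
  "lmeet A x y = (THE i. is_inf_in A x y i)"

definition lbot :: "'a::order set \<Rightarrow> 'a" where
  "lbot A = (THE b. b \<in> A \<and> (\<forall>x\<in>A. b \<le> x))"

definition ltop :: "'a::order set \<Rightarrow> 'a" where
  "ltop A = (THE t. t \<in> A \<and> (\<forall>x\<in>A. x \<le> t))"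

definition ival :: "'a::order set \<Rightarrow> 'a \<Rightarrow> 'a \<Rightarrow> 'a set" where
  "ival A u v = {x \<in> A. u \<le> x \<and> x \<le> v}"

definition downset :: "'a::order set \<Rightarrow> 'a \<Rightarrow> 'a set" where
  "downset A v = {x \<in> A. x \<le> v}"

definition upset :: "'a::order set \<Rightarrow> 'a \<Rightarrow> 'a set" where
  "upset A u = {x \<in> A. u \<le> x}"

definition is_interval :: "'a::order set \<Rightarrow> 'a set \<Rightarrow> bool" where
  "is_interval A S \<longleftrightarrow> (\<exists>u\<in>A. \<exists>v\<in>A. u \<le> v \<and> S = ival A u v)"

definition sup_prime_in :: "'a::order set \<Rightarrow> 'a \<Rightarrow> 'a set \<Rightarrow> bool" where
  "sup_prime_in A u D \<longleftrightarrow> (\<forall>x\<in>D. \<forall>y\<in>D. u \<le> ljoin A x y \<longrightarrow> u \<le> x \<or> u \<le> y)"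

definition inf_prime_in :: "'a::order set \<Rightarrow> 'a \<Rightarrow> 'a set \<Rightarrow> bool" where
  "inf_prime_in A v U \<longleftrightarrow> (\<forall>x\<in>U. \<forall>y\<in>U. lmeet A x y \<le> v \<longrightarrow> x \<le> v \<or> y \<le> v)"

definition quasi_dismantling :: "'a::order set \<Rightarrow> 'a \<Rightarrow> 'a \<Rightarrow> bool" where
  "quasi_dismantling A u v \<longleftrightarrow> u \<in> A \<and> v \<in> A \<and> u \<le> v \<and>
     sup_prime_in A u (downset A v) \<and> inf_prime_in A v (upset A u)"

definition dismantling :: "'a::order set \<Rightarrow> 'a \<Rightarrow> 'a \<Rightarrow> bool" where
  "dismantling A u v \<longleftrightarrow> quasi_dismantling A u v \<and> u \<noteq> lbot A \<and> v \<noteq> ltop A"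

definition dismantling_interval :: "'a::order set \<Rightarrow> 'a set \<Rightarrow> bool" where
  "dismantling_interval A S \<longleftrightarrow> (\<exists>u v. S = ival A u v \<and> dismantling A u v)"

end

theory Submission
  imports Defs
begin

lemma sup_ex: "lattice_on L \<Longrightarrow> x \<in> L \<Longrightarrow> y \<in> L \<Longrightarrow> is_sup_in L x y (ljoin L x y)"
proof -
  assume a: "lattice_on L" "x \<in> L" "y \<in> L"
  then obtain s where s: "is_sup_in L x y s" unfolding lattice_on_def by blast
  have "ljoin L x y = s" unfolding ljoin_def
    by (rule the_equality, rule s) (use s in \<open>auto simp: is_sup_in_def intro: antisym\<close>)
  with s show ?thesis by simp
qed

lemma inf_ex: "lattice_on L \<Longrightarrow> x \<in> L \<Longrightarrow> y \<in> L \<Longrightarrow> is_inf_in L x y (lmeet L x y)"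
proof -
  assume a: "lattice_on L" "x \<in> L" "y \<in> L"
  then obtain s where s: "is_inf_in L x y s" unfolding lattice_on_def by blast
  have "lmeet L x y = s" unfolding lmeet_def
    by (rule the_equality, rule s) (use s in \<open>auto simp: is_inf_in_def intro: antisym\<close>)
  with s show ?thesis by simp
qed

lemma ljoin_sub:
  assumes "is_sup_in L x y s" "s \<in> A" "A \<subseteq> L"
  shows "ljoin A x y = s"
  unfolding ljoin_def
  by (rule the_equality) (use assms in \<open>auto simp: is_sup_in_def intro: antisym\<close>)

lemma lmeet_sub:
  assumes "is_inf_in L x y s" "s \<in> A" "A \<subseteq> L"
  shows "lmeet A x y = s"
  unfolding lmeet_def
  by (rule the_equality) (use assms in \<open>auto simp: is_inf_in_def intro: antisym\<close>)

lemma lbot_eq: "b \<in> A \<Longrightarrow> \<forall>x\<in>A. b \<le> x \<Longrightarrow> lbot A = (b::'a::order)"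
  unfolding lbot_def by (rule the_equality) (auto intro: antisym)

lemma ltop_eq: "b \<in> A \<Longrightarrow> \<forall>x\<in>A. x \<le> b \<Longrightarrow> ltop A = (b::'a::order)"
  unfolding ltop_def by (rule the_equality) (auto intro: antisym)

lemma least_ex:
  fixes A :: "'a::order set"
  assumes "finite A" "A \<noteq> {}" "\<forall>x\<in>A. \<forall>y\<in>A. \<exists>z\<in>A. z \<le> x \<and> z \<le> y"
  shows "\<exists>m\<in>A. \<forall>x\<in>A. m \<le> x"
proof -
  obtain m where m: "m \<in> A" "\<forall>b\<in>A. b \<le> m \<longrightarrow> m = b"
    using finite_has_minimal[OF assms(1,2)] by blast
  have "\<forall>x\<in>A. m \<le> x"
  proof
    fix x assume "x \<in> A"
    then obtain z where "z \<in> A" "z \<le> m" "z \<le> x" using assms(3) m(1) by blast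
    then show "m \<le> x" using m(2) by metis
  qed
  with m show ?thesis by blast
qed

lemma greatest_ex:
  fixes A :: "'a::order set"
  assumes "finite A" "A \<noteq> {}" "\<forall>x\<in>A. \<forall>y\<in>A. \<exists>z\<in>A. x \<le> z \<and> y \<le> z"
  shows "\<exists>m\<in>A. \<forall>x\<in>A. x \<le> m"
proof -
  obtain m where m: "m \<in> A" "\<forall>b\<in>A. m \<le> b \<longrightarrow> m = b"
    using finite_has_maximal[OF assms(1,2)] by blast
  have "\<forall>x\<in>A. x \<le> m"
  proof
    fix x assume "x \<in> A"
    then obtain z where "z \<in> A" "m \<le> z" "x \<le> z" using assms(3) m(1) by blast
    then show "x \<le> m" using m(2) by metis
  qed
  with m show ?thesis by blast
qed

lemma join_out:
  assumes "lattice_on L" "quasi_dismantling L u v" "x \<in> L" "y \<in> L"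
    "x \<notin> ival L u v" "y \<notin> ival L u v"
  shows "ljoin L x y \<notin> ival L u v"
proof
  assume h: "ljoin L x y \<in> ival L u v"
  have s: "is_sup_in L x y (ljoin L x y)" using sup_ex assms by blast
  have "x \<le> v" "y \<le> v" using h s by (auto simp: ival_def is_sup_in_def intro: order_trans)
  hence "x \<in> downset L v" "y \<in> downset L v" using assms by (auto simp: downset_def)
  moreover have "u \<le> ljoin L x y" using h by (auto simp: ival_def)
  ultimately have "u \<le> x \<or> u \<le> y" using assms(2) unfolding quasi_dismantling_def sup_prime_in_def by blast
  thus False using assms \<open>x \<le> v\<close> \<open>y \<le> v\<close> by (auto simp: ival_def)
qed

lemma meet_out:
  assumes "lattice_on L" "quasi_dismantling L u v" "x \<in> L" "y \<in> L"
    "x \<notin> ival L u v" "y \<notin> ival L u v"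
  shows "lmeet L x y \<notin> ival L u v"
proof
  assume h: "lmeet L x y \<in> ival L u v"
  have s: "is_inf_in L x y (lmeet L x y)" using inf_ex assms by blast
  have "u \<le> x" "u \<le> y" using h s by (auto simp: ival_def is_inf_in_def intro: order_trans)
  hence "x \<in> upset L u" "y \<in> upset L u" using assms by (auto simp: upset_def)
  moreover have "lmeet L x y \<le> v" using h by (auto simp: ival_def)
  ultimately have "x \<le> v \<or> y \<le> v" using assms(2) unfolding quasi_dismantling_def inf_prime_in_def by blast
  thus False using assms \<open>u \<le> x\<close> \<open>u \<le> y\<close> by (auto simp: ival_def)
qed

theorem lemma5:
  fixes L S1 S2 :: "'a::order set"
  assumes "finite L" and "lattice_on L"
    and "dismantling_interval L S1" and "dismantling_interval L S2"
    and "\<not> S2 \<subseteq> S1"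
  shows "is_interval (L - S1) (S2 - S1) \<and> dismantling_interval (L - S1) (S2 - S1)"
proof -
  obtain u1 v1 where S1: "S1 = ival L u1 v1" and d1: "dismantling L u1 v1"
    using assms(3) unfolding dismantling_interval_def by blast
  obtain u2 v2 where S2: "S2 = ival L u2 v2" and d2: "dismantling L u2 v2"
    using assms(4) unfolding dismantling_interval_def by blast
  have q1: "quasi_dismantling L u1 v1" using d1 by (simp add: dismantling_def)
  have q2: "quasi_dismantling L u2 v2" using d2 by (simp add: dismantling_def)
  have u1L: "u1 \<in> L" and v1L: "v1 \<in> L" and u2L: "u2 \<in> L" and v2L: "v2 \<in> L" and u2v2: "u2 \<le> v2"
    using q1 q2 by (auto simp: quasi_dismantling_def)
  have Lne: "L \<noteq> {}" using assms(2) by (simp add: lattice_on_def)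
  obtain bot where bot: "bot \<in> L" "\<forall>x\<in>L. bot \<le> x"
    using least_ex[OF assms(1) Lne] inf_ex[OF assms(2)] unfolding is_inf_in_def by blast
  obtain top where top: "top \<in> L" "\<forall>x\<in>L. x \<le> top"
    using greatest_ex[OF assms(1) Lne] sup_ex[OF assms(2)] unfolding is_sup_in_def by blast
  have lbL: "lbot L = bot" using lbot_eq bot by blast
  have ltL: "ltop L = top" using ltop_eq top by blast
  define L' where "L' = L - S1"
  have botL': "bot \<in> L'"
  proof -
    have "u1 \<noteq> bot" using d1 lbL by (simp add: dismantling_def)
    hence "\<not> u1 \<le> bot" using bot u1L by (auto intro: antisym)
    thus ?thesis using bot by (auto simp: L'_def S1 ival_def)
  qed
  have topL': "top \<in> L'"
  proof -
    have "v1 \<noteq> top" using d1 ltL by (simp add: dismantling_def)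
    hence "\<not> top \<le> v1" using top v1L by (auto intro: antisym)
    thus ?thesis using top by (auto simp: L'_def S1 ival_def)
  qed
  have lbL': "lbot L' = bot" by (rule lbot_eq[OF botL']) (use bot in \<open>auto simp: L'_def\<close>)
  have ltL': "ltop L' = top" by (rule ltop_eq[OF topL']) (use top in \<open>auto simp: L'_def\<close>)
  have joinL': "ljoin L' x y = ljoin L x y \<and> ljoin L x y \<in> L'" if "x \<in> L'" "y \<in> L'" for x y
  proof -
    have s: "is_sup_in L x y (ljoin L x y)" using sup_ex assms(2) that by (auto simp: L'_def)
    have "ljoin L x y \<in> L'" using join_out[OF assms(2) q1] that s
      by (auto simp: L'_def S1 is_sup_in_def)
    moreover have "ljoin L' x y = ljoin L x y" using ljoin_sub[OF s calculation] unfolding L'_def by blast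
    ultimately show ?thesis by simp
  qed
  have meetL': "lmeet L' x y = lmeet L x y \<and> lmeet L x y \<in> L'" if "x \<in> L'" "y \<in> L'" for x y
  proof -
    have s: "is_inf_in L x y (lmeet L x y)" using inf_ex assms(2) that by (auto simp: L'_def)
    have "lmeet L x y \<in> L'" using meet_out[OF assms(2) q1] that s
      by (auto simp: L'_def S1 is_inf_in_def)
    moreover have "lmeet L' x y = lmeet L x y" using lmeet_sub[OF s calculation] unfolding L'_def by blast
    ultimately show ?thesis by simp
  qed
  define T where "T = S2 - S1"
  have TL': "T = {x \<in> L'. u2 \<le> x \<and> x \<le> v2}" by (auto simp: T_def L'_def S2 ival_def)
  have Tne: "T \<noteq> {}" using assms(5) by (auto simp: T_def)
  have Tfin: "finite T" using assms(1) by (auto simp: TL' L'_def)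
  have "\<forall>x\<in>T. \<forall>y\<in>T. \<exists>z\<in>T. z \<le> x \<and> z \<le> y"
  proof (intro ballI)
    fix x y assume xy: "x \<in> T" "y \<in> T"
    hence m: "lmeet L x y \<in> L'" using meetL' by (auto simp: TL')
    have s: "is_inf_in L x y (lmeet L x y)" using inf_ex assms(2) xy by (auto simp: TL' L'_def)
    have xy': "x \<in> L" "y \<in> L" "u2 \<le> x" "u2 \<le> y" "x \<le> v2" using xy by (auto simp: TL' L'_def)
    have "u2 \<le> lmeet L x y" using s xy' u2L unfolding is_inf_in_def by blast
    moreover have "lmeet L x y \<le> v2" using s xy' unfolding is_inf_in_def by (meson order_trans)
    ultimately have "lmeet L x y \<in> T" using m by (simp add: TL')
    thus "\<exists>z\<in>T. z \<le> x \<and> z \<le> y" using s by (auto simp: is_inf_in_def)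
  qed
  then obtain a where a: "a \<in> T" "\<forall>x\<in>T. a \<le> x" using least_ex[OF Tfin Tne] by blast
  have "\<forall>x\<in>T. \<forall>y\<in>T. \<exists>z\<in>T. x \<le> z \<and> y \<le> z"
  proof (intro ballI)
    fix x y assume xy: "x \<in> T" "y \<in> T"
    hence m: "ljoin L x y \<in> L'" using joinL' by (auto simp: TL')
    have s: "is_sup_in L x y (ljoin L x y)" using sup_ex assms(2) xy by (auto simp: TL' L'_def)
    have xy': "x \<in> L" "y \<in> L" "x \<le> v2" "y \<le> v2" "u2 \<le> x" using xy by (auto simp: TL' L'_def)
    have "ljoin L x y \<le> v2" using s xy' v2L unfolding is_sup_in_def by blast
    moreover have "u2 \<le> ljoin L x y" using s xy' unfolding is_sup_in_def by (meson order_trans)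
    ultimately have "ljoin L x y \<in> T" using m by (simp add: TL')
    thus "\<exists>z\<in>T. x \<le> z \<and> y \<le> z" using s by (auto simp: is_sup_in_def)
  qed
  then obtain b where b: "b \<in> T" "\<forall>x\<in>T. x \<le> b" using greatest_ex[OF Tfin Tne] by blast
  have ab: "a \<le> b" using a b by blast
  have aL': "a \<in> L'" and bL': "b \<in> L'" and u2a: "u2 \<le> a" and bv2: "b \<le> v2" using a b by (auto simp: TL')
  have Tiv: "T = ival L' a b"
  proof
    show "T \<subseteq> ival L' a b" using a b by (auto simp: TL' ival_def)
    show "ival L' a b \<subseteq> T" using u2a bv2 unfolding TL' ival_def by (auto dest: order_trans)
  qed
  have sp: "sup_prime_in L' a (downset L' b)"
    unfolding sup_prime_in_def
  proof (intro ballI impI)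
    fix x y assume x: "x \<in> downset L' b" and y: "y \<in> downset L' b" and h: "a \<le> ljoin L' x y"
    have xL: "x \<in> L'" "x \<le> b" "y \<in> L'" "y \<le> b" using x y by (auto simp: downset_def)
    have "u2 \<le> ljoin L x y" using h joinL'[OF xL(1) xL(3)] u2a by (metis order_trans)
    moreover have "x \<in> downset L v2" "y \<in> downset L v2" using xL bv2 by (auto simp: downset_def L'_def dest: order_trans)
    ultimately have "u2 \<le> x \<or> u2 \<le> y" using q2 unfolding quasi_dismantling_def sup_prime_in_def by blast
    moreover have "x \<le> v2" "y \<le> v2" using xL(2,4) bv2 by (metis order_trans)+
    ultimately have "x \<in> T \<or> y \<in> T" using xL by (auto simp: TL')
    thus "a \<le> x \<or> a \<le> y" using a by blast
  qed
  have ip: "inf_prime_in L' b (upset L' a)"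
    unfolding inf_prime_in_def
  proof (intro ballI impI)
    fix x y assume x: "x \<in> upset L' a" and y: "y \<in> upset L' a" and h: "lmeet L' x y \<le> b"
    have xL: "x \<in> L'" "a \<le> x" "y \<in> L'" "a \<le> y" using x y by (auto simp: upset_def)
    have "lmeet L x y \<le> v2" using h meetL'[OF xL(1) xL(3)] bv2 by (metis order_trans)
    moreover have "x \<in> upset L u2" "y \<in> upset L u2" using xL u2a by (auto simp: upset_def L'_def dest: order_trans)
    ultimately have "x \<le> v2 \<or> y \<le> v2" using q2 unfolding quasi_dismantling_def inf_prime_in_def by blast
    moreover have "u2 \<le> x" "u2 \<le> y" using xL(2,4) u2a by (metis order_trans)+
    ultimately have "x \<in> T \<or> y \<in> T" using xL by (auto simp: TL')
    thus "x \<le> b \<or> y \<le> b" using b by blast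
  qed
  have anb: "a \<noteq> bot"
  proof
    assume "a = bot"
    hence "u2 = bot" using u2a bot u2L by (auto intro: antisym)
    thus False using d2 lbL by (simp add: dismantling_def)
  qed
  have bnt: "b \<noteq> top"
  proof
    assume "b = top"
    hence "v2 = top" using bv2 top v2L by (auto intro: antisym)
    thus False using d2 ltL by (simp add: dismantling_def)
  qed
  have "dismantling L' a b"
    using aL' bL' ab sp ip anb bnt lbL' ltL' by (simp add: dismantling_def quasi_dismantling_def)
  hence "dismantling_interval L' T" using Tiv by (auto simp: dismantling_interval_def)
  moreover have "is_interval L' T" using aL' bL' ab Tiv by (auto simp: is_interval_def)
  ultimately show ?thesis by (simp add: T_def L'_def)
qed

end
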